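(* Let $G=(V,E)$ be an acyclic finite directed graph, $\Gamma\subset V$ containing all sinks and sources with $V\setminus\Gamma\ne\emptyset$. Let $z=(z_v)_{v\in\Gamma}$ with each $z_v$ a real diagonal $d\times d$ matrix, and for $1\le i\le d$ let $z(i,i)=(z_v(i,i))_{v\in\Gamma}\in\mathbb R^\Gamma$. Then, for each $i$, $\chi_1$ has a unique minimiser $m(i,i)=(m_v(i,i))_{v\in V}$ on $\mathbb R^V(z(i,i))$, and $\chi_d$ has a unique minimiser on $\mathrm{Sym}_d^V(z)$, namely the array $m=(m_v)_{v\in V}$ of diagonal matrices with diagonal entries $m_v(i,i)$, $1\le i\le d$.
   Context: $v\to w$ denotes an edge $(v,w)\in E$; a sink has no outgoing edges, a source no incoming edges. $\mathrm{Sym}_d$: $d\times d$ real symmetric matrices ($\mathrm{Sym}_1=\mathbb R$). For $z\in\mathrm{Sym}_d^\Gamma$, $\mathrm{Sym}_d^V(z)=\{x=(x_v)_{v\in V}\in\mathrm{Sym}_d^V:x_v=z_v\ \forall v\in\Gamma\}$. $\chi_d(x)=\sum_{v\to w}\operatorname{tr}[e^{x_v-x_w}]$ (matrix exponential); $\chi_1(x)=\sum_{v\to w}e^{x_v-x_w}$ on $\mathbb R^V$. *)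

theory Defs
  imports "HOL-Analysis.Analysis"
begin

definition mat_pow :: "real^'n^'n \<Rightarrow> nat \<Rightarrow> real^'n^'n" where
  "mat_pow A k = ((\<lambda>B. A ** B) ^^ k) (mat 1)"

definition mat_exp :: "real^'n^'n \<Rightarrow> real^'n^'n" where
  "mat_exp A = (\<chi> i j. (\<Sum>k. (mat_pow A k $ i $ j) / fact k))"

definition sym_mat :: "real^'n^'n \<Rightarrow> bool" where
  "sym_mat A \<longleftrightarrow> transpose A = A"

definition diag_mat :: "real^'n^'n \<Rightarrow> bool" where
  "diag_mat A \<longleftrightarrow> (\<forall>i j. i \<noteq> j \<longrightarrow> A $ i $ j = 0)"

definition is_sink :: "'v set \<Rightarrow> ('v \<times> 'v) set \<Rightarrow> 'v \<Rightarrow> bool" where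
  "is_sink V E v \<longleftrightarrow> v \<in> V \<and> (\<forall>w. (v, w) \<notin> E)"

definition is_source :: "'v set \<Rightarrow> ('v \<times> 'v) set \<Rightarrow> 'v \<Rightarrow> bool" where
  "is_source V E v \<longleftrightarrow> v \<in> V \<and> (\<forall>w. (w, v) \<notin> E)"

definition chi_d :: "('v \<times> 'v) set \<Rightarrow> ('v \<Rightarrow> real^'n^'n) \<Rightarrow> real" where
  "chi_d E x = (\<Sum>(v, w)\<in>E. trace (mat_exp (x v - x w)))"

definition chi_1 :: "('v \<times> 'v) set \<Rightarrow> ('v \<Rightarrow> real) \<Rightarrow> real" where
  "chi_1 E x = (\<Sum>(v, w)\<in>E. exp (x v - x w))"

text \<open>Arrays indexed by V are functions, extended by 0 outside V.\<close>
definition RV :: "'v set \<Rightarrow> 'v set \<Rightarrow> ('v \<Rightarrow> real) \<Rightarrow> ('v \<Rightarrow> real) set" where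
  "RV V \<Gamma> z = {x. (\<forall>v\<in>\<Gamma>. x v = z v) \<and> (\<forall>v. v \<notin> V \<longrightarrow> x v = 0)}"

definition SymV :: "'v set \<Rightarrow> 'v set \<Rightarrow> ('v \<Rightarrow> real^'n^'n) \<Rightarrow> ('v \<Rightarrow> real^'n^'n) set" where
  "SymV V \<Gamma> z = {x. (\<forall>v\<in>V. sym_mat (x v)) \<and> (\<forall>v\<in>\<Gamma>. x v = z v) \<and> (\<forall>v. v \<notin> V \<longrightarrow> x v = 0)}"

definition unique_minimiser :: "('a \<Rightarrow> real) \<Rightarrow> 'a set \<Rightarrow> 'a \<Rightarrow> bool" where
  "unique_minimiser f S m \<longleftrightarrow> m \<in> S \<and> (\<forall>x\<in>S. f m \<le> f x) \<and>
     (\<forall>m'\<in>S. (\<forall>x\<in>S. f m' \<le> f x) \<longrightarrow> m' = m)"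

end

theory Submission
  imports Defs
begin


lemma exp_strict_tangent0:
  fixes x :: real assumes "x \<noteq> 0" shows "1 + x < exp x"
proof (cases "x \<le> -2")
  case True then show ?thesis using exp_gt_zero[of x] by linarith
next
  case False
  have "1 + x/2 \<le> exp (x/2)" by simp
  moreover have "0 \<le> 1 + x/2" using False by simp
  ultimately have "(1 + x/2)^2 \<le> exp (x/2) ^ 2" by (rule power_mono)
  also have "\<dots> = exp x" by (simp add: power2_eq_square exp_add[symmetric])
  finally have "(1 + x/2)^2 \<le> exp x" .
  moreover have "(1 + x/2)^2 = 1 + x + x^2/4" by (simp add: power2_eq_square field_simps)
  moreover have "x^2 > 0" using assms by simp
  ultimately show ?thesis by linarith
qed

lemma exp_tangent:
  fixes y c :: real
  shows "exp c * (1 + (y - c)) \<le> exp y"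
    and "y \<noteq> c \<Longrightarrow> exp c * (1 + (y - c)) < exp y"
proof -
  have e: "exp y = exp c * exp (y - c)" by (simp add: exp_add[symmetric])
  show "exp c * (1 + (y - c)) \<le> exp y" unfolding e
    by (intro mult_left_mono) auto
  assume "y \<noteq> c"
  then have "1 + (y - c) < exp (y - c)" by (intro exp_strict_tangent0) simp
  then show "exp c * (1 + (y - c)) < exp y" unfolding e
    by (intro mult_strict_left_mono) auto
qed

lemma sym_inner:
  fixes C :: "real^'n^'n"
  assumes "sym_mat C" shows "x \<bullet> (C *v y) = (C *v x) \<bullet> y"
  by (metis assms dot_lmul_matrix sym_mat_def vector_transpose_matrix)

lemma spectral_aux:
  fixes C :: "real^'n^'n"
  assumes sym: "\<And>x y. x \<bullet> (C *v y) = (C *v x) \<bullet> y"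
  shows "subspace S \<Longrightarrow> (\<forall>x\<in>S. C *v x \<in> S) \<Longrightarrow>
    \<exists>B. finite B \<and> B \<subseteq> S \<and> pairwise orthogonal B \<and>
        (\<forall>u\<in>B. norm u = 1 \<and> C *v u = (u \<bullet> (C *v u)) *\<^sub>R u) \<and> S \<subseteq> span B"
proof (induction "dim S" arbitrary: S rule: less_induct)
  case less
  show ?case
  proof (cases "S \<subseteq> {0}")
    case True
    then show ?thesis by (intro exI[of _ "{}"]) auto
  next
    case False
    then obtain x0 where x0: "x0 \<in> S" "x0 \<noteq> 0" by auto
    let ?K = "S \<inter> sphere 0 1"
    have Kc: "compact ?K" using closed_subspace[OF less.prems(1)] compact_sphere
      by (intro closed_Int_compact) auto
    have "x0 /\<^sub>R norm x0 \<in> ?K" using x0 less.prems(1)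
      by (auto simp: subspace_scale)
    then have Kne: "?K \<noteq> {}" by auto
    have cont: "continuous_on ?K (\<lambda>x. x \<bullet> (C *v x))" by (intro continuous_intros)
    obtain u where u: "u \<in> ?K" and umax: "\<And>y. y \<in> ?K \<Longrightarrow> y \<bullet> (C *v y) \<le> u \<bullet> (C *v u)"
      using continuous_attains_sup[OF Kc Kne cont] by blast
    define l where "l = u \<bullet> (C *v u)"
    have uS: "u \<in> S" and nu: "norm u = 1" using u by auto
    have uu: "u \<bullet> u = 1" using nu by (simp add: norm_eq_1)
    have orth0: "v \<bullet> (C *v u) = 0" if vS: "v \<in> S" and vu: "v \<bullet> u = 0" for v
    proof -
      define a where "a = v \<bullet> (C *v u)"
      define c where "c = v \<bullet> (C *v v) - l * (v \<bullet> v)"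
      have key: "2*t*a + t^2 * c \<le> 0" for t
      proof -
        define w where "w = u + t *\<^sub>R v"
        have wS: "w \<in> S" unfolding w_def using uS vS less.prems(1)
          by (simp add: subspace_add subspace_scale)
        have ww: "w \<bullet> w = 1 + t^2 * (v \<bullet> v)" unfolding w_def
          using uu vu by (simp add: inner_add_left inner_add_right inner_commute power2_eq_square)
        have wpos: "0 < w \<bullet> w" unfolding ww by (simp add: add_pos_nonneg)
        then have nw: "norm w > 0" by (simp add: norm_eq_sqrt_inner)
        have "w /\<^sub>R norm w \<in> ?K" using wS nw less.prems(1) by (auto simp: subspace_scale)
        then have "(w /\<^sub>R norm w) \<bullet> (C *v (w /\<^sub>R norm w)) \<le> l" unfolding l_def by (rule umax)
        then have "(w \<bullet> (C *v w)) / (norm w)^2 \<le> l"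
          by (simp add: matrix_vector_mult_scaleR power2_eq_square divide_inverse mult_ac)
        then have "w \<bullet> (C *v w) \<le> l * (norm w)^2" using nw by (simp add: divide_le_eq)
        then have le: "w \<bullet> (C *v w) \<le> l * (w \<bullet> w)" by (simp add: power2_norm_eq_inner)
        have s1: "u \<bullet> (C *v v) = a" unfolding a_def using sym[of u v] by (simp add: inner_commute)
        have "w \<bullet> (C *v w) = l + 2*t*a + t^2 * (v \<bullet> (C *v v))" unfolding w_def
          using s1 by (simp add: matrix_vector_right_distrib matrix_vector_mult_scaleR
              inner_add_left inner_add_right l_def a_def power2_eq_square algebra_simps)
        with le ww show ?thesis unfolding c_def by (simp add: algebra_simps)
      qed
      have "a = 0"
      proof (rule ccontr)
        assume a0: "a \<noteq> 0"
        define t where "t = a / (\<bar>c\<bar> + 1)"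
        have d: "\<bar>c\<bar> + 1 > 0" by simp
        have gen: "\<And>r. (r::real) > 0 \<Longrightarrow> 2*(a/r)*a + (a/r)^2*c = a^2 * (2*r + c) / r^2"
          by (simp add: field_simps power2_eq_square)
        have "2*t*a + t^2*c = a^2 * (2*(\<bar>c\<bar>+1) + c) / (\<bar>c\<bar>+1)^2"
          unfolding t_def using gen[OF d] .
        moreover have "a^2 * (2*(\<bar>c\<bar>+1) + c) / (\<bar>c\<bar>+1)^2 > 0"
          using a0 d by (intro divide_pos_pos mult_pos_pos) (auto simp: abs_if)
        ultimately show False using key[of t] by linarith
      qed
      then show ?thesis unfolding a_def .
    qed
    have Cu: "C *v u = l *\<^sub>R u"
    proof -
      define v where "v = C *v u - l *\<^sub>R u"
      have vS: "v \<in> S" unfolding v_def using less.prems uS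
        by (simp add: subspace_diff subspace_scale)
      have "v \<bullet> u = 0" unfolding v_def l_def using uu
        by (simp add: inner_diff_left inner_commute[of "C *v u" u])
      then have "v \<bullet> (C *v u) = 0" using orth0 vS by blast
      then have "v \<bullet> v = 0" using \<open>v \<bullet> u = 0\<close>
        unfolding v_def by (simp add: inner_diff_left inner_diff_right inner_commute)
      then show ?thesis unfolding v_def by simp
    qed
    define S' where "S' = S \<inter> {x. x \<bullet> u = 0}"
    have sub': "subspace S'" unfolding S'_def
      using less.prems(1) by (auto simp: subspace_def inner_add_left)
    have inv': "\<forall>x\<in>S'. C *v x \<in> S'"
    proof
      fix x assume x: "x \<in> S'"
      have "(C *v x) \<bullet> u = x \<bullet> (C *v u)" using sym[of x u] by simp
      also have "\<dots> = 0" using x Cu unfolding S'_def by simp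
      finally show "C *v x \<in> S'" using x less.prems(2) unfolding S'_def by auto
    qed
    have "span S' \<subset> span S"
      unfolding span_eq_iff[THEN iffD2, OF sub'] span_eq_iff[THEN iffD2, OF less.prems(1)]
      using uS uu unfolding S'_def by (metis (mono_tags, lifting) Int_iff inf_le1 mem_Collect_eq psubsetI zero_neq_one)
    then have "dim S' < dim S" by (rule dim_psubset)
    from less.hyps[OF this sub' inv'] obtain B' where B': "finite B'" "B' \<subseteq> S'"
      "pairwise orthogonal B'" "\<forall>u\<in>B'. norm u = 1 \<and> C *v u = (u \<bullet> (C *v u)) *\<^sub>R u"
      "S' \<subseteq> span B'" by blast
    have uB': "u \<notin> B'" using B'(2) uu unfolding S'_def by auto
    show ?thesis
    proof (intro exI[of _ "insert u B'"] conjI)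
      show "finite (insert u B')" using B' by simp
      show "insert u B' \<subseteq> S" using B'(2) uS unfolding S'_def by auto
      show "pairwise orthogonal (insert u B')" using B'(2,3) unfolding pairwise_insert
        by (auto simp: S'_def orthogonal_def inner_commute)
      show "\<forall>w\<in>insert u B'. norm w = 1 \<and> C *v w = (w \<bullet> (C *v w)) *\<^sub>R w"
        using B'(4) nu Cu l_def by auto
      show "S \<subseteq> span (insert u B')"
      proof
        fix x assume x: "x \<in> S"
        have "x - (x \<bullet> u) *\<^sub>R u \<in> S'" unfolding S'_def using x uS less.prems(1) uu
          by (simp add: subspace_diff subspace_scale inner_diff_left)
        then have "x - (x \<bullet> u) *\<^sub>R u \<in> span (insert u B')"
          using B'(5) span_mono[of B' "insert u B'"] by auto
        moreover have "(x \<bullet> u) *\<^sub>R u \<in> span (insert u B')"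
          by (simp add: span_base span_scale)
        ultimately have "x - (x \<bullet> u) *\<^sub>R u + (x \<bullet> u) *\<^sub>R u \<in> span (insert u B')"
          by (rule span_add)
        then show "x \<in> span (insert u B')" by simp
      qed
    qed
  qed
qed

lemma spectral:
  fixes C :: "real^'n^'n" assumes "sym_mat C"
  obtains B where "finite B" "pairwise orthogonal B" "\<And>u. u\<in>B \<Longrightarrow> norm u = 1"
    "\<And>u. u\<in>B \<Longrightarrow> C *v u = (u \<bullet> (C *v u)) *\<^sub>R u"
    "\<And>x. (\<Sum>u\<in>B. (x \<bullet> u) *\<^sub>R u) = x"
proof -
  obtain B where B: "finite B" "pairwise orthogonal B"
    "\<forall>u\<in>B. norm u = 1 \<and> C *v u = (u \<bullet> (C *v u)) *\<^sub>R u" "UNIV \<subseteq> span B"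
    using spectral_aux[of C UNIV] sym_inner[OF assms] by auto
  have ip: "u \<bullet> u' = (if u = u' then 1 else 0)" if "u\<in>B" "u'\<in>B" for u u'
    using B(2,3) that by (auto simp: pairwise_def orthogonal_def norm_eq_1)
  have "(\<Sum>u\<in>B. (x \<bullet> u) *\<^sub>R u) = x" for x
  proof -
    define y where "y = x - (\<Sum>u\<in>B. (x \<bullet> u) *\<^sub>R u)"
    have "orthogonal y u'" if "u' \<in> B" for u'
    proof -
      have "(\<Sum>u\<in>B. (x \<bullet> u) *\<^sub>R u) \<bullet> u' = (\<Sum>u\<in>B. (x \<bullet> u) * (u \<bullet> u'))"
        by (simp add: inner_sum_left)
      also have "\<dots> = (\<Sum>u\<in>B. if u = u' then x \<bullet> u else 0)"
        by (rule sum.cong) (auto simp: ip that)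
      also have "\<dots> = x \<bullet> u'" using that B(1) by simp
      finally show ?thesis unfolding orthogonal_def y_def inner_diff_left by simp
    qed
    then have "orthogonal y y" using orthogonal_to_span[of y B y] B(4) by auto
    then show ?thesis unfolding y_def orthogonal_def by simp
  qed
  then show ?thesis using that B by blast
qed

lemma mat_pow_Suc: "mat_pow C (Suc k) = C ** mat_pow C k"
  by (simp add: mat_pow_def)

lemma mat_pow_eig:
  assumes "C *v u = l *\<^sub>R u"
  shows "mat_pow C k *v u = (l ^ k) *\<^sub>R u"
proof (induction k)
  case 0 then show ?case by (simp add: mat_pow_def)
next
  case (Suc k)
  have "mat_pow C (Suc k) *v u = C *v (mat_pow C k *v u)"
    by (simp add: mat_pow_Suc matrix_vector_mul_assoc)
  also have "\<dots> = (l ^ Suc k) *\<^sub>R u" using Suc assms by (simp add: matrix_vector_mult_scaleR)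
  finally show ?case .
qed

lemma entry_formula:
  fixes A :: "real^'n^'n"
  assumes B: "\<And>x. (\<Sum>u\<in>B. (x \<bullet> u) *\<^sub>R u) = x"
  shows "A $ j $ i = (\<Sum>u\<in>B. u$i * (A *v u) $ j)"
proof -
  have "A $ j $ i = (A *v axis i 1) $ j" by (simp add: matrix_vector_mult_basis column_def)
  also have "axis i 1 = (\<Sum>u\<in>B. (u $ i) *\<^sub>R u)" using B[of "axis i 1"] by (simp add: inner_axis')
  finally show ?thesis by (simp add: vec.sum matrix_vector_mult_scaleR sum_component)
qed

lemma eig_formulas:
  fixes C :: "real^'n^'n"
  assumes B: "finite B" "pairwise orthogonal B" "\<And>u. u\<in>B \<Longrightarrow> norm u = 1"
    "\<And>u. u\<in>B \<Longrightarrow> C *v u = lam u *\<^sub>R u"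
    "\<And>x. (\<Sum>u\<in>B. (x \<bullet> u) *\<^sub>R u) = x"
  shows "mat_pow C k $ j $ i = (\<Sum>u\<in>B. u$i * u$j * lam u ^ k)"
    and "C $ j $ i = (\<Sum>u\<in>B. u$i * u$j * lam u)"
    and "(\<Sum>u\<in>B. u$i * u$j) = (if i = j then 1 else 0)"
    and "u \<in> B \<Longrightarrow> (\<Sum>i\<in>UNIV. (u$i)^2) = 1"
    and "mat_exp C $ j $ i = (\<Sum>u\<in>B. u$i * u$j * exp (lam u))"
proof -
  show pk: "mat_pow C k $ j $ i = (\<Sum>u\<in>B. u$i * u$j * lam u ^ k)" for k
    using entry_formula[OF B(5), of "mat_pow C k" j i] mat_pow_eig[OF B(4)]
    by (simp add: mult_ac)
  show "C $ j $ i = (\<Sum>u\<in>B. u$i * u$j * lam u)"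
    using entry_formula[OF B(5), of C j i] B(4) by (simp add: mult_ac)
  show "(\<Sum>u\<in>B. u$i * u$j) = (if i = j then 1 else 0)"
  proof -
    have "mat 1 $ j $ i = (\<Sum>u\<in>B. u$i * (mat 1 *v u) $ j)"
      using entry_formula[OF B(5), of "mat 1" j i] .
    then show ?thesis by (simp add: matrix_vector_mul_lid) (auto simp: mat_def)
  qed
  show "u \<in> B \<Longrightarrow> (\<Sum>i\<in>UNIV. (u$i)^2) = 1"
    using B(3)[of u] by (simp add: norm_eq_1 inner_vec_def power2_eq_square)
  have "mat_exp C $ j $ i = (\<Sum>k. (\<Sum>u\<in>B. u$i * u$j * lam u ^ k) / fact k)"
    by (simp add: mat_exp_def pk)
  also have "\<dots> = (\<Sum>k. \<Sum>u\<in>B. u$i * u$j * (lam u ^ k / fact k))"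
    by (simp add: sum_divide_distrib)
  also have "\<dots> = (\<Sum>u\<in>B. \<Sum>k. u$i * u$j * (lam u ^ k / fact k))"
  proof (rule suminf_sum)
    fix u show "summable (\<lambda>k. u$i * u$j * (lam u ^ k / fact k))"
      using exp_converges[of "lam u"] by (intro summable_mult) (simp add: sums_summable divide_inverse mult.commute)
  qed
  also have "\<dots> = (\<Sum>u\<in>B. u$i * u$j * exp (lam u))"
  proof (rule sum.cong)
    fix u
    have "(\<lambda>k. lam u ^ k / fact k) sums exp (lam u)"
      using exp_converges[of "lam u"] by (simp add: divide_inverse mult.commute)
    then show "(\<Sum>k. u$i * u$j * (lam u ^ k / fact k)) = u$i * u$j * exp (lam u)"
      by (intro sums_unique[symmetric] sums_mult)
  qed simp
  finally show "mat_exp C $ j $ i = (\<Sum>u\<in>B. u$i * u$j * exp (lam u))" .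
qed

lemma peierls:
  fixes C :: "real^'n^'n"
  assumes sym: "sym_mat C"
  shows "(\<Sum>i\<in>UNIV. exp (C$i$i)) \<le> trace (mat_exp C)"
    and "trace (mat_exp C) = (\<Sum>i\<in>UNIV. exp (C$i$i)) \<Longrightarrow> diag_mat C"
proof -
  obtain B where B: "finite B" "pairwise orthogonal B" "\<And>u. u\<in>B \<Longrightarrow> norm u = 1"
    "\<And>u. u\<in>B \<Longrightarrow> C *v u = (u \<bullet> (C *v u)) *\<^sub>R u"
    "\<And>x. (\<Sum>u\<in>B. (x \<bullet> u) *\<^sub>R u) = x"
    using spectral[OF sym] by blast
  define lam where "lam u = u \<bullet> (C *v u)" for u
  have B4: "\<And>u. u\<in>B \<Longrightarrow> C *v u = lam u *\<^sub>R u" using B(4) unfolding lam_def .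
  note F = eig_formulas[where lam=lam, OF B(1) B(2) B(3) B4 B(5)]
  define g where "g i u = (u$i)^2 * (exp (lam u) - exp (C$i$i) * (1 + (lam u - C$i$i)))" for i u
  have gnn: "g i u \<ge> 0" for i u
    unfolding g_def using exp_tangent(1)[of "C$i$i" "lam u"] by simp
  have gap: "mat_exp C $ i $ i - exp (C$i$i) = (\<Sum>u\<in>B. g i u)" for i
  proof -
    have w1: "(\<Sum>u\<in>B. (u$i)^2) = 1" using F(3)[of i i] by (simp add: power2_eq_square)
    have cw: "C$i$i = (\<Sum>u\<in>B. (u$i)^2 * lam u)" using F(2)[of i i] by (simp add: power2_eq_square)
    have "(\<Sum>u\<in>B. g i u) = (\<Sum>u\<in>B. (u$i)^2 * exp (lam u))
        - exp (C$i$i) * ((\<Sum>u\<in>B. (u$i)^2) + (\<Sum>u\<in>B. (u$i)^2 * lam u) - C$i$i * (\<Sum>u\<in>B. (u$i)^2))"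
      unfolding g_def by (simp add: algebra_simps sum.distrib sum_subtractf sum_distrib_left sum_distrib_right)
    also have "\<dots> = mat_exp C $ i $ i - exp (C$i$i)"
      using F(5)[of i i] w1 cw[symmetric] by (simp add: power2_eq_square)
    finally show ?thesis by simp
  qed
  have le: "exp (C$i$i) \<le> mat_exp C $ i $ i" for i
    using gap[of i] sum_nonneg[of B "g i"] gnn by fastforce
  show "(\<Sum>i\<in>UNIV. exp (C$i$i)) \<le> trace (mat_exp C)"
    unfolding trace_def by (rule sum_mono) (rule le)
  assume eq: "trace (mat_exp C) = (\<Sum>i\<in>UNIV. exp (C$i$i))"
  have "(\<Sum>i\<in>UNIV. mat_exp C $ i $ i - exp (C$i$i)) = 0"
    using eq unfolding trace_def by (simp add: sum_subtractf)
  then have "\<forall>i\<in>UNIV. mat_exp C $ i $ i - exp (C$i$i) = 0"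
    by (subst sum_nonneg_eq_0_iff[symmetric]) (auto simp: le)
  then have "(\<Sum>u\<in>B. g i u) = 0" for i using gap by simp
  then have g0: "g i u = 0" if "u \<in> B" for i u
    using sum_nonneg_eq_0_iff[of B "g i"] gnn B(1) that by auto
  have cond: "u$i = 0 \<or> lam u = C$i$i" if "u \<in> B" for i u
  proof (rule ccontr)
    assume "\<not> ?thesis"
    then have "u$i \<noteq> 0" "lam u \<noteq> C$i$i" by auto
    then have "(u$i)^2 > 0" "exp (lam u) - exp (C$i$i) * (1 + (lam u - C$i$i)) > 0"
      using exp_tangent(2)[of "lam u" "C$i$i"] by auto
    then have "g i u > 0" unfolding g_def by simp
    then show False using g0[OF that] by simp
  qed
  show "diag_mat C" unfolding diag_mat_def
  proof (intro allI impI)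
    fix i j :: 'n assume ij: "i \<noteq> j"
    have "C $ i $ j = (\<Sum>u\<in>B. u$j * u$i * lam u)" by (rule F(2))
    also have "\<dots> = (\<Sum>u\<in>B. u$j * u$i * C$j$j)"
      by (rule sum.cong) (use cond in auto)
    also have "\<dots> = (\<Sum>u\<in>B. u$j * u$i) * C$j$j" by (simp add: sum_distrib_right)
    also have "\<dots> = 0" using F(3)[of j i] ij by simp
    finally show "C $ i $ j = 0" .
  qed
qed

lemma diag_mat_pow:
  fixes C :: "real^'n^'n"
  assumes "diag_mat C"
  shows "mat_pow C k = (\<chi> i j. if i = j then (C$i$i)^k else 0)"
proof (induction k)
  case 0 then show ?case by (auto simp: mat_pow_def mat_def vec_eq_iff fun_eq_iff)
next
  case (Suc k)
  have e: "(C ** mat_pow C k) $ i $ j = (if i = j then (C$i$i)^Suc k else 0)" for i j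
  proof -
    have "(C ** mat_pow C k) $ i $ j = (\<Sum>l\<in>UNIV. C $ i $ l * (if l = j then C $ l $ l ^ k else 0))"
      unfolding Suc by (simp add: matrix_matrix_mult_def)
    also have "\<dots> = (\<Sum>l\<in>UNIV. if l = j then C $ i $ l * C $ l $ l ^ k else 0)"
      by (rule sum.cong) auto
    also have "\<dots> = C $ i $ j * C $ j $ j ^ k" by simp
    also have "\<dots> = (if i = j then (C$i$i)^Suc k else 0)"
      using assms unfolding diag_mat_def by auto
    finally show ?thesis .
  qed
  show ?case by (simp add: mat_pow_Suc vec_eq_iff e)
qed

lemma diag_trace_exp:
  fixes C :: "real^'n^'n"
  assumes "diag_mat C"
  shows "trace (mat_exp C) = (\<Sum>i\<in>UNIV. exp (C$i$i))"
proof -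
  have "mat_exp C $ i $ i = exp (C$i$i)" for i
  proof -
    have "(\<lambda>k. (C$i$i) ^ k / fact k) sums exp (C$i$i)"
      using exp_converges[of "C$i$i"] by (simp add: divide_inverse mult.commute)
    then show ?thesis unfolding mat_exp_def diag_mat_pow[OF assms] by (simp add: sums_iff)
  qed
  then show ?thesis unfolding trace_def by simp
qed



lemma sink_induct:
  assumes fin: "finite R" and acy: "acyclic R" and RV: "R \<subseteq> V \<times> V"
    and sinkG: "\<And>v. v \<in> V \<Longrightarrow> (\<forall>w. (v,w) \<notin> R) \<Longrightarrow> v \<in> \<Gamma>"
    and base: "\<And>v. v \<in> \<Gamma> \<Longrightarrow> P v"
    and step: "\<And>v w. v \<in> V \<Longrightarrow> v \<notin> \<Gamma> \<Longrightarrow> (v,w) \<in> R \<Longrightarrow> P w \<Longrightarrow> P v"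
    and v: "v \<in> V"
  shows "P v"
  using v
proof (induction v rule: wf_induct_rule[OF finite_acyclic_wf_converse[OF fin acy]])
  case (1 v)
  show ?case
  proof (cases "v \<in> \<Gamma>")
    case True then show ?thesis by (rule base)
  next
    case False
    then obtain w where w: "(v,w) \<in> R" using sinkG 1(2) by blast
    then have "w \<in> V" using RV by auto
    then have "P w" using 1(1) w by blast
    then show ?thesis using step 1(2) False w by blast
  qed
qed

lemma upper_bound:
  fixes x :: "'v \<Rightarrow> real"
  assumes fin: "finite R" and acy: "acyclic R" and RV: "R \<subseteq> V \<times> V" and finV: "finite V"
    and sinkG: "\<And>v. v \<in> V \<Longrightarrow> (\<forall>w. (v,w) \<notin> R) \<Longrightarrow> v \<in> \<Gamma>"
    and edge: "\<And>v w. (v,w) \<in> R \<Longrightarrow> x v \<le> x w + c" and c: "c \<ge> 0"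
    and base: "\<And>v. v \<in> \<Gamma> \<Longrightarrow> x v \<le> Z"
    and v: "v \<in> V"
  shows "x v \<le> Z + c * card V"
proof -
  have sub: "R\<^sup>+ `` {u} \<subseteq> V" for u
    using RV by (auto elim: tranclE)
  have "x v \<le> Z + c * card (R\<^sup>+ `` {v})"
  proof (rule sink_induct[OF fin acy RV sinkG _ _ v])
    fix u assume "u \<in> \<Gamma>"
    then show "x u \<le> Z + c * card (R\<^sup>+ `` {u})" using base c by (simp add: add_increasing2)
  next
    fix u w assume uw: "(u,w) \<in> R" and IH: "x w \<le> Z + c * real (card (R\<^sup>+ `` {w}))"
    have "R\<^sup>+ `` {w} \<subset> R\<^sup>+ `` {u}"
    proof
      show "R\<^sup>+ `` {w} \<subseteq> R\<^sup>+ `` {u}" using uw by (auto intro: trancl_into_trancl2)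
      have "w \<in> R\<^sup>+ `` {u}" using uw by auto
      moreover have "w \<notin> R\<^sup>+ `` {w}" using acy unfolding acyclic_def by auto
      ultimately show "R\<^sup>+ `` {w} \<noteq> R\<^sup>+ `` {u}" by blast
    qed
    then have "card (R\<^sup>+ `` {w}) < card (R\<^sup>+ `` {u})"
      using finite_subset[OF sub finV] by (intro psubset_card_mono) auto
    then have "real (card (R\<^sup>+ `` {w})) + 1 \<le> real (card (R\<^sup>+ `` {u}))" by simp
    then have "c * real (card (R\<^sup>+ `` {w})) + c \<le> c * real (card (R\<^sup>+ `` {u}))"
      using c by (metis distrib_left mult.right_neutral mult_left_mono)
    then show "x u \<le> Z + c * real (card (R\<^sup>+ `` {u}))" using edge[OF uw] IH by linarith
  qed
  also have "\<dots> \<le> Z + c * card V"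
    using card_mono[OF finV sub[of v]] c by (simp add: mult_left_mono)
  finally show ?thesis .
qed

lemma exp_midpoint:
  fixes a b :: real
  shows "exp ((a+b)/2) \<le> (exp a + exp b)/2"
    and "a \<noteq> b \<Longrightarrow> exp ((a+b)/2) < (exp a + exp b)/2"
proof -
  let ?c = "(a+b)/2"
  have s: "exp ?c * (1 + (a - ?c)) + exp ?c * (1 + (b - ?c)) = 2 * exp ?c"
    by (simp add: algebra_simps)
  have "exp ?c * (1 + (a - ?c)) + exp ?c * (1 + (b - ?c)) \<le> exp a + exp b"
    by (rule add_mono; rule exp_tangent(1))
  then show "exp ((a+b)/2) \<le> (exp a + exp b)/2" unfolding s by simp
  assume "a \<noteq> b"
  then have "a \<noteq> ?c" by simp
  then have "exp ?c * (1 + (a - ?c)) + exp ?c * (1 + (b - ?c)) < exp a + exp b"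
    by (intro add_less_le_mono exp_tangent)
  then show "exp ((a+b)/2) < (exp a + exp b)/2" unfolding s by simp
qed

lemma cont_coord: "continuous_on S (\<lambda>x::'v \<Rightarrow> real. x v)"
  by (rule continuous_on_subset[OF continuous_on_product_coordinates]) simp

lemma chi1_cont: "continuous_on S (chi_1 E)"
  unfolding chi_1_def
  by (intro continuous_on_sum) (auto simp: split_def intro!: continuous_intros cont_coord)



context
  fixes V \<Gamma> :: "'v set" and E :: "('v \<times> 'v) set"
  assumes finV: "finite V" and EV: "E \<subseteq> V \<times> V" and acy: "acyclic E" and GV: "\<Gamma> \<subseteq> V"
    and sinks: "\<And>v. is_sink V E v \<Longrightarrow> v \<in> \<Gamma>" and sources: "\<And>v. is_source V E v \<Longrightarrow> v \<in> \<Gamma>"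
begin

lemma finE: "finite E"
  using EV finV by (meson finite_SigmaI finite_subset)

lemma sinkE: "v \<in> V \<Longrightarrow> (\<forall>w. (v,w) \<notin> E) \<Longrightarrow> v \<in> \<Gamma>"
  using sinks unfolding is_sink_def by blast

lemma sinkE': "v \<in> V \<Longrightarrow> (\<forall>w. (v,w) \<notin> E\<inverse>) \<Longrightarrow> v \<in> \<Gamma>"
  using sources unfolding is_source_def by blast

lemma chi1_min_exists:
  "\<exists>m\<in>RV V \<Gamma> y. \<forall>x\<in>RV V \<Gamma> y. chi_1 E m \<le> chi_1 E x"
proof -
  define x0 where "x0 v = (if v \<in> \<Gamma> then y v else 0)" for v
  have x0R: "x0 \<in> RV V \<Gamma> y" unfolding RV_def x0_def using GV by auto
  define M where "M = max 1 (chi_1 E x0)"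
  define c where "c = ln M"
  have M1: "M \<ge> 1" unfolding M_def by simp
  have c0: "c \<ge> 0" unfolding c_def using M1 by simp
  define Z where "Z = (\<Sum>v\<in>\<Gamma>. \<bar>y v\<bar>)"
  have finG: "finite \<Gamma>" using finite_subset[OF GV finV] .
  have Zy: "\<bar>y v\<bar> \<le> Z" if "v \<in> \<Gamma>" for v
    unfolding Z_def using finG that by (intro member_le_sum) auto
  have Z0: "Z \<ge> 0" unfolding Z_def by (simp add: sum_nonneg)
  define Bd where "Bd = Z + c * card V"
  have Bd0: "Bd \<ge> 0" unfolding Bd_def using Z0 c0 by simp
  define S where "S v = (if v \<in> \<Gamma> then {y v} else if v \<in> V then {-Bd..Bd} else {0::real})" for v
  define K where "K = PiE UNIV S"
  have Kc: "compact K"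
  proof -
    have "compactin (product_topology (\<lambda>i. euclidean) UNIV) K"
      unfolding K_def compactin_PiE by (auto simp: S_def)
    then show ?thesis by (simp add: euclidean_product_topology)
  qed
  have KR: "K \<subseteq> RV V \<Gamma> y" unfolding K_def RV_def S_def using GV by (auto simp: PiE_def Pi_def)
  have x0K: "x0 \<in> K" unfolding K_def S_def x0_def using Bd0 GV by auto
  then have Kne: "K \<noteq> {}" by auto
  obtain m where mK: "m \<in> K" and mmin: "\<And>x. x \<in> K \<Longrightarrow> chi_1 E m \<le> chi_1 E x"
    using continuous_attains_inf[OF Kc Kne chi1_cont] by blast
  have bound: "\<bar>x v\<bar> \<le> Bd" if xR: "x \<in> RV V \<Gamma> y" and xM: "chi_1 E x \<le> M" and v: "v \<in> V" for x v
  proof -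
    have ed: "x a \<le> x b + c" if ab: "(a,b) \<in> E" for a b
    proof -
      have "(\<lambda>(v,w). exp (x v - x w)) (a,b) \<le> (\<Sum>p\<in>E. (\<lambda>(v,w). exp (x v - x w)) p)"
        by (rule member_le_sum[OF ab]) (auto simp: finE)
      then have "exp (x a - x b) \<le> chi_1 E x" unfolding chi_1_def by simp
      then have "exp (x a - x b) \<le> M" using xM by simp
      then have "x a - x b \<le> ln M" using M1 by (simp add: ln_ge_iff)
      then show ?thesis unfolding c_def by simp
    qed
    have base: "x u \<le> Z" "- x u \<le> Z" if "u \<in> \<Gamma>" for u
      using xR that Zy[OF that] unfolding RV_def by auto
    have "x v \<le> Z + c * card V"
      by (rule upper_bound[OF finE acy EV finV sinkE _ c0 base(1) v]) (auto intro: ed)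
    moreover have "- x v \<le> Z + c * card V"
    proof (rule upper_bound[of "E\<inverse>" V \<Gamma> "\<lambda>v. - x v" c Z, OF _ _ _ finV sinkE' _ c0 base(2) v])
      show "finite (E\<inverse>)" using finE by simp
      show "acyclic (E\<inverse>)" using acy by (simp add: acyclic_converse)
      show "E\<inverse> \<subseteq> V \<times> V" using EV by auto
      fix a b assume "(a,b) \<in> E\<inverse>"
      then show "- x a \<le> - x b + c" using ed[of b a] by simp
    qed
    ultimately show ?thesis unfolding Bd_def by simp
  qed
  show ?thesis
  proof (intro bexI[of _ m] ballI)
    show "m \<in> RV V \<Gamma> y" using mK KR by auto
    fix x assume xR: "x \<in> RV V \<Gamma> y"
    show "chi_1 E m \<le> chi_1 E x"
    proof (cases "x \<in> K")
      case True then show ?thesis by (rule mmin)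
    next
      case False
      then obtain v where "x v \<notin> S v" unfolding K_def by (auto simp: PiE_def Pi_def)
      then have v: "v \<in> V" "\<bar>x v\<bar> > Bd" using xR unfolding S_def RV_def
        by (auto split: if_splits)
      have "chi_1 E x > M" using bound[OF xR _ v(1)] v(2) by force
      moreover have "chi_1 E m \<le> chi_1 E x0" by (rule mmin[OF x0K])
      moreover have "chi_1 E x0 \<le> M" unfolding M_def by simp
      ultimately show ?thesis by simp
    qed
  qed
qed

lemma chi1_unique:
  assumes mR: "m \<in> RV V \<Gamma> y" and m'R: "m' \<in> RV V \<Gamma> y"
    and mmin: "\<forall>x\<in>RV V \<Gamma> y. chi_1 E m \<le> chi_1 E x"
    and m'min: "\<forall>x\<in>RV V \<Gamma> y. chi_1 E m' \<le> chi_1 E x"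
  shows "m' = m"
proof -
  define h where "h v = m' v - m v" for v
  define mid where "mid v = (m v + m' v) / 2" for v
  have midR: "mid \<in> RV V \<Gamma> y" using mR m'R unfolding RV_def mid_def by auto
  have eq: "chi_1 E m = chi_1 E m'" using mmin m'min mR m'R by (meson order_antisym)
  have hE: "h a = h b" if ab: "(a,b) \<in> E" for a b
  proof (rule ccontr)
    assume ne: "h a \<noteq> h b"
    have "chi_1 E mid < (chi_1 E m + chi_1 E m') / 2"
    proof -
      have "chi_1 E mid = (\<Sum>(v,w)\<in>E. exp (((m v - m w) + (m' v - m' w))/2))"
        unfolding chi_1_def mid_def by (rule sum.cong) (auto simp: field_simps)
      also have "\<dots> < (\<Sum>(v,w)\<in>E. (exp (m v - m w) + exp (m' v - m' w))/2)"
      proof (rule sum_strict_mono_ex1[OF finE])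
        show "\<forall>p\<in>E. (case p of (v,w) \<Rightarrow> exp (((m v - m w) + (m' v - m' w))/2))
                 \<le> (case p of (v,w) \<Rightarrow> (exp (m v - m w) + exp (m' v - m' w))/2)"
          by (auto intro: exp_midpoint(1))
        show "\<exists>p\<in>E. (case p of (v,w) \<Rightarrow> exp (((m v - m w) + (m' v - m' w))/2))
                 < (case p of (v,w) \<Rightarrow> (exp (m v - m w) + exp (m' v - m' w))/2)"
          using ab ne exp_midpoint(2)[of "m a - m b" "m' a - m' b"] unfolding h_def
          by (intro bexI[of _ "(a,b)"]) auto
      qed
      also have "\<dots> = (chi_1 E m + chi_1 E m') / 2"
        unfolding chi_1_def by (simp add: split_def sum_divide_distrib[symmetric] sum.distrib[symmetric])
      finally show ?thesis .
    qed
    then have "chi_1 E mid < chi_1 E m" using eq by simp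
    with mmin midR show False by auto
  qed
  have h0: "h v = 0" if "v \<in> V" for v
  proof (rule sink_induct[OF finE acy EV sinkE _ _ that])
    fix u assume "u \<in> \<Gamma>" then show "h u = 0" using mR m'R unfolding RV_def h_def by auto
  next
    fix u w assume "(u,w) \<in> E" "h w = 0" then show "h u = 0" using hE by auto
  qed
  show ?thesis
  proof
    fix v show "m' v = m v"
      using h0[of v] mR m'R unfolding RV_def h_def by (cases "v \<in> V") auto
  qed
qed

end


lemma sum_eq_parts:
  fixes f g :: "'a \<Rightarrow> real"
  assumes "finite A" "\<And>a. a \<in> A \<Longrightarrow> f a \<le> g a" "sum g A \<le> sum f A" "a \<in> A"
  shows "f a = g a"
proof -
  have "sum (\<lambda>a. g a - f a) A \<le> 0" using assms(3) by (simp add: sum_subtractf)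
  moreover have "sum (\<lambda>a. g a - f a) A \<ge> 0" using assms(2) by (simp add: sum_nonneg)
  ultimately have "sum (\<lambda>a. g a - f a) A = 0" by simp
  then have "\<forall>a\<in>A. g a - f a = 0" using assms(1,2) by (subst (asm) sum_nonneg_eq_0_iff) auto
  then show ?thesis using assms(4) by simp
qed

lemma sym_diff: "sym_mat A \<Longrightarrow> sym_mat B \<Longrightarrow> sym_mat (A - B)"
  unfolding sym_mat_def by (simp add: transpose_def vec_eq_iff)

lemma diag_diff: "diag_mat A \<Longrightarrow> diag_mat B \<Longrightarrow> diag_mat (A - B)"
  unfolding diag_mat_def by simp

theorem mainTheorem16:
  fixes V \<Gamma> :: "'v set" and E :: "('v \<times> 'v) set"
    and z :: "'v \<Rightarrow> real^'d^'d"
  assumes "finite V" and "E \<subseteq> V \<times> V" and "acyclic E"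
    and "\<Gamma> \<subseteq> V"
    and "\<And>v. is_sink V E v \<Longrightarrow> v \<in> \<Gamma>"
    and "\<And>v. is_source V E v \<Longrightarrow> v \<in> \<Gamma>"
    and "V - \<Gamma> \<noteq> {}"
    and "\<And>v. v \<in> \<Gamma> \<Longrightarrow> diag_mat (z v)"
  shows "\<exists>m :: 'd \<Rightarrow> 'v \<Rightarrow> real.
           (\<forall>i. unique_minimiser (chi_1 E) (RV V \<Gamma> (\<lambda>v. z v $ i $ i)) (m i)) \<and>
           unique_minimiser (chi_d E) (SymV V \<Gamma> z)
             (\<lambda>v. \<chi> i j. if i = j then m i v else 0)"
proof -
  note A = assms(1-6)
  have finE: "finite E" by (rule finE[OF A])
  define P where "P i mi \<longleftrightarrow> mi \<in> RV V \<Gamma> (\<lambda>v. z v $ i $ i) \<and>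
      (\<forall>x\<in>RV V \<Gamma> (\<lambda>v. z v $ i $ i). chi_1 E mi \<le> chi_1 E x)" for i mi
  define m where "m i = (SOME mi. P i mi)" for i
  have mP: "P i (m i)" for i
    unfolding m_def using chi1_min_exists[OF A, of "\<lambda>v. z v $ i $ i"] P_def
    by (metis (no_types, lifting) someI_ex)
  have mR: "m i \<in> RV V \<Gamma> (\<lambda>v. z v $ i $ i)" for i using mP[of i] unfolding P_def by blast
  have mmin: "\<forall>x\<in>RV V \<Gamma> (\<lambda>v. z v $ i $ i). chi_1 E (m i) \<le> chi_1 E x" for i
    using mP[of i] unfolding P_def by blast
  have um: "unique_minimiser (chi_1 E) (RV V \<Gamma> (\<lambda>v. z v $ i $ i)) (m i)" for i
    unfolding unique_minimiser_def using mR mmin chi1_unique[OF A mR] by blast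
  define M where "M v = (\<chi> i j. if i = j then m i v else (0::real))" for v
  have Mdiag: "diag_mat (M v)" for v unfolding M_def diag_mat_def by simp
  have MS: "M \<in> SymV V \<Gamma> z"
    unfolding SymV_def
  proof (intro CollectI conjI ballI allI impI)
    fix v show "sym_mat (M v)" unfolding sym_mat_def M_def by (simp add: transpose_def vec_eq_iff)
  next
    fix v assume v: "v \<in> \<Gamma>"
    show "M v = z v"
      unfolding M_def vec_eq_iff using mR v assms(8)[OF v] unfolding RV_def diag_mat_def by auto
  next
    fix v assume v: "v \<notin> V"
    show "M v = 0" unfolding M_def vec_eq_iff using mR v unfolding RV_def by auto
  qed
  have diagR: "(\<lambda>v. x v $ i $ i) \<in> RV V \<Gamma> (\<lambda>v. z v $ i $ i)" if "x \<in> SymV V \<Gamma> z" for x i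
    using that unfolding SymV_def RV_def by auto
  have edge_le: "(\<Sum>i\<in>UNIV. exp (x v $ i $ i - x w $ i $ i)) \<le> trace (mat_exp (x v - x w))"
    if "x \<in> SymV V \<Gamma> z" "(v,w) \<in> E" for x v w
  proof -
    have "sym_mat (x v - x w)" using that assms(2) unfolding SymV_def by (auto intro: sym_diff)
    from peierls(1)[OF this] show ?thesis by simp
  qed
  have swap: "(\<Sum>(v,w)\<in>E. \<Sum>i\<in>UNIV. exp (x v $ i $ i - x w $ i $ i)) =
      (\<Sum>i\<in>UNIV. chi_1 E (\<lambda>v. x v $ i $ i))" for x :: "'v \<Rightarrow> real^'d^'d"
    unfolding chi_1_def split_def by (rule sum.swap)
  have lower: "(\<Sum>i\<in>UNIV. chi_1 E (\<lambda>v. x v $ i $ i)) \<le> chi_d E x" if "x \<in> SymV V \<Gamma> z" for x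
    unfolding swap[symmetric] chi_d_def using edge_le[OF that]
    by (intro sum_mono) auto
  have chiM: "chi_d E M = (\<Sum>i\<in>UNIV. chi_1 E (m i))"
  proof -
    have "chi_d E M = (\<Sum>(v,w)\<in>E. \<Sum>i\<in>UNIV. exp (M v $ i $ i - M w $ i $ i))"
      unfolding chi_d_def
      by (rule sum.cong) (auto simp: diag_trace_exp[OF diag_diff[OF Mdiag Mdiag]])
    also have "\<dots> = (\<Sum>i\<in>UNIV. chi_1 E (\<lambda>v. M v $ i $ i))" by (rule swap)
    finally show ?thesis unfolding M_def by simp
  qed
  have Mmin: "chi_d E M \<le> chi_d E x" if xS: "x \<in> SymV V \<Gamma> z" for x
  proof -
    have "chi_d E M \<le> (\<Sum>i\<in>UNIV. chi_1 E (\<lambda>v. x v $ i $ i))"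
      unfolding chiM using mmin diagR[OF xS] by (intro sum_mono) blast
    also have "\<dots> \<le> chi_d E x" by (rule lower[OF xS])
    finally show ?thesis .
  qed
  have Muniq: "x = M" if xS: "x \<in> SymV V \<Gamma> z" and xmin: "\<forall>y\<in>SymV V \<Gamma> z. chi_d E x \<le> chi_d E y" for x
  proof -
    have xM: "chi_d E x \<le> chi_d E M" using xmin MS by blast
    have ci: "chi_1 E (m i) \<le> chi_1 E (\<lambda>v. x v $ i $ i)" for i using mmin diagR[OF xS] by blast
    have s1: "(\<Sum>i\<in>UNIV. chi_1 E (\<lambda>v. x v $ i $ i)) \<le> (\<Sum>i\<in>UNIV. chi_1 E (m i))"
      using xM lower[OF xS] chiM by simp
    have eqi: "chi_1 E (m i) = chi_1 E (\<lambda>v. x v $ i $ i)" for i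
      by (rule sum_eq_parts[of UNIV, OF _ _ s1]) (auto simp: ci)
    have xi: "(\<lambda>v. x v $ i $ i) = m i" for i
    proof (rule chi1_unique[OF A mR diagR[OF xS]])
      show "\<forall>y\<in>RV V \<Gamma> (\<lambda>v. z v $ i $ i). chi_1 E (m i) \<le> chi_1 E y" by (rule mmin)
      show "\<forall>y\<in>RV V \<Gamma> (\<lambda>v. z v $ i $ i). chi_1 E (\<lambda>v. x v $ i $ i) \<le> chi_1 E y"
        using mmin eqi by metis
    qed
    have s2: "(\<Sum>p\<in>E. trace (mat_exp (x (fst p) - x (snd p)))) \<le>
              (\<Sum>p\<in>E. \<Sum>i\<in>UNIV. exp (x (fst p) $ i $ i - x (snd p) $ i $ i))"
    proof -
      have "(\<Sum>i\<in>UNIV. chi_1 E (m i)) = (\<Sum>i\<in>UNIV. chi_1 E (\<lambda>v. x v $ i $ i))"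
        using eqi by simp
      then show ?thesis
        using xM lower[OF xS] chiM swap[of x] unfolding chi_d_def split_def by linarith
    qed
    have ediag: "diag_mat (x v - x w)" if vw: "(v,w) \<in> E" for v w
    proof -
      have "sym_mat (x v - x w)" using xS vw assms(2) unfolding SymV_def by (auto intro: sym_diff)
      moreover have "(\<Sum>i\<in>UNIV. exp (x v $ i $ i - x w $ i $ i)) = trace (mat_exp (x v - x w))"
        using sum_eq_parts[OF finE _ s2 vw] edge_le[OF xS] by auto
      ultimately show ?thesis using peierls(2) by fastforce
    qed
    have xdiag: "diag_mat (x v)" if "v \<in> V" for v
    proof (rule sink_induct[OF finE assms(3) assms(2) sinkE[OF A] _ _ that])
      fix u assume "u \<in> \<Gamma>" then show "diag_mat (x u)" using xS assms(8) unfolding SymV_def by auto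
    next
      fix u w assume "(u,w) \<in> E" "diag_mat (x w)"
      then show "diag_mat (x u)" using ediag[of u w] unfolding diag_mat_def by force
    qed
    show "x = M"
    proof
      fix v
      show "x v = M v"
      proof (cases "v \<in> V")
        case True
        then show ?thesis using xdiag[OF True] xi unfolding M_def vec_eq_iff diag_mat_def
          by (auto simp: fun_eq_iff)
      next
        case False
        then show ?thesis using xS MS unfolding SymV_def by auto
      qed
    qed
  qed
  show ?thesis
  proof (intro exI[of _ m] conjI allI)
    show "unique_minimiser (chi_1 E) (RV V \<Gamma> (\<lambda>v. z v $ i $ i)) (m i)" for i by (rule um)
    show "unique_minimiser (chi_d E) (SymV V \<Gamma> z) (\<lambda>v. \<chi> i j. if i = j then m i v else 0)"
      unfolding M_def[symmetric] unique_minimiser_def using MS Mmin Muniq by blast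
  qed
qed


end
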